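(* (1) If $A$ is a finite abelian group, then $A$ has, up to isomorphism, a unique GI-extension, namely $A\rtimes C_2$ where the generator of $C_2$ acts by $a\mapsto -a$. (2) For a finite group $G$, the direct product $G\times C_2$ (with $G=G\times\{1\}$) is a GI-extension of $G$ if and only if $G$ is generated by elements of order $2$. (3) For $n\ge 2$, the symmetric group $S_n$ is a GI-extension of the alternating group $A_n$.
   Context: Given a group $G'$ with a normal subgroup $G$ of index $2$, $G'$ is called a GI-extension of $G$ if $G'$ is generated by involutions (elements of order exactly $2$) that are not contained in $G$. *)

theory Defs
  imports "HOL-Algebra.Algebra"
begin

definition GI_extension :: "('a, 'b) monoid_scheme \<Rightarrow> 'a set \<Rightarrow> bool" where
  "GI_extension Gp H \<longleftrightarrow>
     group Gp \<and> H \<lhd> Gp \<and> card (rcosets\<^bsub>Gp\<^esub> H) = 2 \<and>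
     carrier Gp = generate Gp {x \<in> carrier Gp - H. group.ord Gp x = 2}"

text \<open>The semidirect product of A with C_2 (C_2 represented by bool, True = generator),
where the generator acts by inversion: (a,s)(b,t) = (a * s(b), s xor t).\<close>
definition inv_sdp :: "('a, 'b) monoid_scheme \<Rightarrow> ('a \<times> bool) monoid" where
  "inv_sdp A = \<lparr> carrier = carrier A \<times> UNIV,
     monoid.mult = (\<lambda>(a, s) (b, t). (a \<otimes>\<^bsub>A\<^esub> (if s then inv\<^bsub>A\<^esub> b else b), s \<noteq> t)),
     monoid.one = (\<one>\<^bsub>A\<^esub>, False) \<rparr>"

definition sdp_base :: "('a, 'b) monoid_scheme \<Rightarrow> ('a \<times> bool) set" where
  "sdp_base A = (\<lambda>a. (a, False)) ` carrier A"

end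

theory Submission
  imports Defs
begin

lemma (in group) ord_2_iff:
  assumes "x \<in> carrier G"
  shows "ord x = 2 \<longleftrightarrow> x \<otimes> x = \<one> \<and> x \<noteq> \<one>"
proof
  assume "ord x = 2"
  then show "x \<otimes> x = \<one> \<and> x \<noteq> \<one>"
    using pow_ord_eq_1[OF assms] ord_eq_1[OF assms] assms
    by (metis nat_pow_Suc nat_pow_0 l_one numeral_2_eq_2 One_nat_def zero_neq_numeral n_not_Suc_n)
next
  assume h: "x \<otimes> x = \<one> \<and> x \<noteq> \<one>"
  have "x [^] (2::nat) = \<one>" using h assms by (simp add: numeral_2_eq_2)
  then have "ord x dvd 2" using pow_eq_id[OF assms] by blast
  moreover have "ord x \<noteq> 1" using ord_eq_1[OF assms] h by blast
  moreover have "ord x \<noteq> 0" using calculation(1) by (metis dvd_0_left_iff zero_neq_numeral)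
  ultimately show "ord x = 2"
    by (metis dvd_antisym dvd_refl nat_dvd_1_iff_1 two_is_prime_nat prime_nat_iff)
qed

lemma index2_from_hom:
  assumes "group G" "group H" "h \<in> hom G H" "h ` carrier G = carrier H" "card (carrier H) = 2"
  shows "kernel G H h \<lhd> G" "card (rcosets\<^bsub>G\<^esub> (kernel G H h)) = 2"
proof -
  interpret group_hom G H h
    using assms by (simp add: group_hom_def group_hom_axioms_def)
  show "kernel G H h \<lhd> G" by (rule normal_kernel)
  show "card (rcosets\<^bsub>G\<^esub> (kernel G H h)) = 2"
    using iso_same_card[OF FactGroup_iso[OF assms(4)]] assms(5)
    unfolding FactGroup_def by simp
qed

lemma swapidseq_ext_gen:
  assumes "swapidseq_ext S k p" "S \<subseteq> {1..n}"
  shows "p \<in> generate (sym_group n) {x \<in> carrier (sym_group n) - carrier (alt_group n). group.ord (sym_group n) x = 2}"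
  using assms
proof (induction)
  case empty
  then show ?case by (metis generate.one sym_group_one)
next
  case (single S k p a)
  then show ?case by simp
next
  case (comp S k p a b)
  have ab: "a \<in> {1..n}" "b \<in> {1..n}" using comp by auto
  have tc: "transpose a b \<in> carrier (sym_group n)"
    unfolding sym_group_carrier by (rule permutes_swap_id[OF ab])
  have "transpose a b \<notin> carrier (alt_group n)"
    using comp(2) by (simp add: alt_group_carrier evenperm_swap)
  moreover have "group.ord (sym_group n) (transpose a b) = 2"
  proof -
    have "transpose a b \<noteq> id"
    proof
      assume "transpose a b = id"
      then have "transpose a b a = id a" by simp
      then show False using comp(2) by simp
    qed
    then show ?thesis
      using group.ord_2_iff[OF sym_group_is_group tc]
      by (simp add: sym_group_mult sym_group_one)
  qed
  ultimately have "transpose a b \<in> generate (sym_group n) {x \<in> carrier (sym_group n) - carrier (alt_group n). group.ord (sym_group n) x = 2}"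
    using tc by (intro generate.incl) auto
  moreover have "p \<in> generate (sym_group n) {x \<in> carrier (sym_group n) - carrier (alt_group n). group.ord (sym_group n) x = 2}"
    using comp.IH comp.prems by auto
  ultimately have "transpose a b \<otimes>\<^bsub>sym_group n\<^esub> p \<in> generate (sym_group n) {x \<in> carrier (sym_group n) - carrier (alt_group n). group.ord (sym_group n) x = 2}"
    by (rule generate.eng)
  then show ?case by (simp only: sym_group_mult)
qed

lemma part3:
  assumes "n \<ge> 2"
  shows "GI_extension (sym_group n) (carrier (alt_group n))"
proof -
  have cardR: "card (rcosets\<^bsub>sym_group n\<^esub> (carrier (alt_group n))) = 2"
    using iso_same_card[OF sign_iso[OF assms]] unfolding FactGroup_def sign_img_def by auto
  have nor: "carrier (alt_group n) \<lhd> sym_group n"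
    unfolding alt_group_is_sign_kernel by (rule group_hom.normal_kernel[OF sign_group_hom])
  let ?T = "{x \<in> carrier (sym_group n) - carrier (alt_group n). group.ord (sym_group n) x = 2}"
  have "carrier (sym_group n) \<subseteq> generate (sym_group n) ?T"
  proof
    fix p assume "p \<in> carrier (sym_group n)"
    then have "p permutes {1..n}" by (simp add: sym_group_carrier)
    then obtain k where "swapidseq_ext {1..n} k p"
      using swapidseq_ext_of_permutation[OF _ finite_atLeastAtMost] by blast
    then show "p \<in> generate (sym_group n) ?T" by (rule swapidseq_ext_gen[OF _ order_refl])
  qed
  moreover have "generate (sym_group n) ?T \<subseteq> carrier (sym_group n)"
    by (rule group.generate_incl[OF sym_group_is_group]) auto
  ultimately have "carrier (sym_group n) = generate (sym_group n) ?T" by (rule equalityI)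
  then show ?thesis unfolding GI_extension_def
    using sym_group_is_group nor cardR by (intro conjI)
qed


lemma Z2_carrier: "carrier (integer_mod_group 2) = {0, 1}"
  by (auto simp: carrier_integer_mod_group)

lemma part2:
  fixes G :: "('e, 'f) monoid_scheme"
  assumes grp: "group G"
  shows "GI_extension (G \<times>\<times> integer_mod_group 2) (carrier G \<times> {0})
        \<longleftrightarrow> carrier G = generate G {x \<in> carrier G. group.ord G x = 2}"
proof -
  interpret G: group G by fact
  let ?Z = "integer_mod_group 2"
  let ?P = "G \<times>\<times> ?Z"
  have gP: "group ?P" by (simp add: DirProd_group grp)
  interpret P: group ?P by (rule gP)
  have hom: "snd \<in> hom ?P ?Z"
    unfolding hom_def by (auto simp: mult_DirProd')
  have surj: "snd ` carrier ?P = carrier ?Z"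
  proof -
    have "snd ` carrier ?P = snd ` (carrier G \<times> carrier ?Z)" by simp
    also have "\<dots> = carrier ?Z" using G.one_closed by auto
    finally show ?thesis .
  qed
  have ker: "kernel ?P ?Z snd = carrier G \<times> {0}"
    unfolding kernel_def by (auto simp: Z2_carrier)
  have cZ: "card (carrier ?Z) = 2" by (simp add: Z2_carrier)
  note ih = index2_from_hom[OF gP group_integer_mod_group hom surj cZ, unfolded ker]
  let ?T = "{x \<in> carrier ?P - carrier G \<times> {0}. group.ord ?P x = 2}"
  let ?S = "{x \<in> carrier G. group.ord G x = 2}"
  have Tchar: "x \<in> ?T \<longleftrightarrow> (\<exists>g. x = (g, 1) \<and> g \<in> carrier G \<and> g \<otimes>\<^bsub>G\<^esub> g = \<one>\<^bsub>G\<^esub>)" for x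
  proof -
    have "x \<in> ?T \<longleftrightarrow> x \<in> carrier ?P \<and> snd x \<noteq> 0 \<and> x \<otimes>\<^bsub>?P\<^esub> x = \<one>\<^bsub>?P\<^esub> \<and> x \<noteq> \<one>\<^bsub>?P\<^esub>"
      using P.ord_2_iff[of x] by (cases x) auto
    also have "\<dots> \<longleftrightarrow> (\<exists>g. x = (g, 1) \<and> g \<in> carrier G \<and> g \<otimes>\<^bsub>G\<^esub> g = \<one>\<^bsub>G\<^esub>)"
      by (cases x) (auto simp: Z2_carrier)
    finally show ?thesis .
  qed
  have "carrier ?P = generate ?P ?T \<longleftrightarrow> carrier G = generate G ?S"
  proof
    assume eq: "carrier ?P = generate ?P ?T"
    have "fst x \<in> generate G ?S" if "x \<in> generate ?P ?T" for x
      using that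
    proof (induction)
      case one
      then show ?case by (simp add: generate.one)
    next
      case (incl h)
      then obtain g where g: "h = (g, 1)" "g \<in> carrier G" "g \<otimes>\<^bsub>G\<^esub> g = \<one>\<^bsub>G\<^esub>"
        using Tchar by blast
      show ?case
      proof (cases "g = \<one>\<^bsub>G\<^esub>")
        case True then show ?thesis using g by (simp add: generate.one)
      next
        case False then show ?thesis using g G.ord_2_iff[of g] by (auto intro: generate.incl)
      qed
    next
      case (inv h)
      then obtain g where g: "h = (g, 1)" "g \<in> carrier G" "g \<otimes>\<^bsub>G\<^esub> g = \<one>\<^bsub>G\<^esub>"
        using Tchar by blast
      have "inv\<^bsub>?P\<^esub> h = (inv\<^bsub>G\<^esub> g, inv\<^bsub>?Z\<^esub> 1)" using g by (simp add: grp Z2_carrier)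
      moreover have "inv\<^bsub>G\<^esub> g = g" using g G.inv_equality by blast
      ultimately have "fst (inv\<^bsub>?P\<^esub> h) = g" by simp
      show ?case
      proof (cases "g = \<one>\<^bsub>G\<^esub>")
        case True then show ?thesis using g \<open>fst (inv\<^bsub>?P\<^esub> h) = g\<close> by (simp add: generate.one)
      next
        case False then show ?thesis using g G.ord_2_iff[of g] \<open>fst (inv\<^bsub>?P\<^esub> h) = g\<close>
          by (auto intro: generate.incl)
      qed
    next
      case (eng h1 h2)
      then show ?case by (simp add: mult_DirProd' generate.eng)
    qed
    moreover have "generate G ?S \<subseteq> carrier G" by (rule G.generate_incl) auto
    ultimately show "carrier G = generate G ?S"
      using eq by force
  next
    assume eq: "carrier G = generate G ?S"
    have one1: "(\<one>\<^bsub>G\<^esub>, 1) \<in> generate ?P ?T"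
      by (rule generate.incl, subst Tchar) (use G.one_closed in auto)
    have "(g, 0) \<in> generate ?P ?T" if "g \<in> generate G ?S" for g
      using that
    proof (induction)
      case one
      then show ?case using generate.one[of ?P ?T] by simp
    next
      case (incl h)
      then have "(h, 1) \<in> generate ?P ?T"
        using G.ord_2_iff[of h] by (intro generate.incl, subst Tchar) auto
      from generate.eng[OF this one1] incl show ?case by simp
    next
      case (inv h)
      then have "inv\<^bsub>G\<^esub> h = h" using G.ord_2_iff[of h] G.inv_equality by blast
      then have "(h, 1) \<in> generate ?P ?T"
        using inv G.ord_2_iff[of h] by (intro generate.incl, subst Tchar) auto
      from generate.eng[OF this one1] inv \<open>inv\<^bsub>G\<^esub> h = h\<close> show ?case by simp
    next
      case (eng h1 h2)
      from generate.eng[OF eng.IH] show ?case by simp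
    qed
    note g0 = this
    have "carrier ?P \<subseteq> generate ?P ?T"
    proof
      fix y assume y: "y \<in> carrier ?P"
      then obtain g k where yk: "y = (g, k)" "g \<in> carrier G" "k \<in> {0, 1}"
        by (auto simp: Z2_carrier)
      have "(g, 0) \<in> generate ?P ?T" using g0 yk eq by blast
      show "y \<in> generate ?P ?T"
      proof (cases "k = 0")
        case True then show ?thesis using yk \<open>(g, 0) \<in> generate ?P ?T\<close> by simp
      next
        case False
        then have "k = 1" using yk by simp
        from generate.eng[OF \<open>(g, 0) \<in> generate ?P ?T\<close> one1] show ?thesis
          using yk \<open>k = 1\<close> by simp
      qed
    qed
    moreover have "generate ?P ?T \<subseteq> carrier ?P" by (rule P.generate_incl) auto
    ultimately show "carrier ?P = generate ?P ?T" by blast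
  qed
  then show ?thesis unfolding GI_extension_def using gP ih by blast
qed


lemma carrier_inv_sdp [simp]: "carrier (inv_sdp A) = carrier A \<times> UNIV"
  by (simp add: inv_sdp_def)
lemma one_inv_sdp [simp]: "\<one>\<^bsub>inv_sdp A\<^esub> = (\<one>\<^bsub>A\<^esub>, False)"
  by (simp add: inv_sdp_def)
lemma mult_inv_sdp [simp]:
  "(a, s) \<otimes>\<^bsub>inv_sdp A\<^esub> (b, t) = (a \<otimes>\<^bsub>A\<^esub> (if s then inv\<^bsub>A\<^esub> b else b), s \<noteq> t)"
  by (simp add: inv_sdp_def)

lemma inv_sdp_group:
  assumes "comm_group A"
  shows "group (inv_sdp A)"
proof -
  interpret A: comm_group A by fact
  show ?thesis
  proof (rule groupI)
    fix x y assume "x \<in> carrier (inv_sdp A)" "y \<in> carrier (inv_sdp A)"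
    then show "x \<otimes>\<^bsub>inv_sdp A\<^esub> y \<in> carrier (inv_sdp A)"
      by (cases x, cases y) auto
  next
    show "\<one>\<^bsub>inv_sdp A\<^esub> \<in> carrier (inv_sdp A)" by simp
  next
    fix x y z assume "x \<in> carrier (inv_sdp A)" "y \<in> carrier (inv_sdp A)" "z \<in> carrier (inv_sdp A)"
    then show "x \<otimes>\<^bsub>inv_sdp A\<^esub> y \<otimes>\<^bsub>inv_sdp A\<^esub> z = x \<otimes>\<^bsub>inv_sdp A\<^esub> (y \<otimes>\<^bsub>inv_sdp A\<^esub> z)"
      by (cases x, cases y, cases z) (auto simp: A.m_assoc A.inv_mult)
  next
    fix x assume "x \<in> carrier (inv_sdp A)"
    then show "\<one>\<^bsub>inv_sdp A\<^esub> \<otimes>\<^bsub>inv_sdp A\<^esub> x = x"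
      by (cases x) auto
  next
    fix x assume "x \<in> carrier (inv_sdp A)"
    then obtain a s where x: "x = (a, s)" "a \<in> carrier A" by (cases x) auto
    show "\<exists>y \<in> carrier (inv_sdp A). y \<otimes>\<^bsub>inv_sdp A\<^esub> x = \<one>\<^bsub>inv_sdp A\<^esub>"
      by (rule bexI[of _ "(if s then a else inv\<^bsub>A\<^esub> a, s)"]) (use x in auto)
  qed
qed

lemma part1a:
  assumes "comm_group A"
  shows "GI_extension (inv_sdp A) (sdp_base A)"
proof -
  interpret A: comm_group A by fact
  let ?Z = "integer_mod_group 2"
  let ?P = "inv_sdp A"
  let ?q = "\<lambda>x::('a \<times> bool). if snd x then (1::int) else 0"
  have gP: "group ?P" by (rule inv_sdp_group[OF assms])
  interpret P: group ?P by (rule gP)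
  have hom: "?q \<in> hom ?P ?Z"
    unfolding hom_def by (auto simp: Z2_carrier)
  have surj: "?q ` carrier ?P = carrier ?Z"
  proof
    show "?q ` carrier ?P \<subseteq> carrier ?Z" by (auto simp: Z2_carrier)
    have "0 = ?q (\<one>\<^bsub>A\<^esub>, False)" "1 = ?q (\<one>\<^bsub>A\<^esub>, True)" by simp_all
    moreover have "(\<one>\<^bsub>A\<^esub>, False) \<in> carrier ?P" "(\<one>\<^bsub>A\<^esub>, True) \<in> carrier ?P" by simp_all
    ultimately show "carrier ?Z \<subseteq> ?q ` carrier ?P" unfolding Z2_carrier
      using image_eqI[of "0::int" ?q "(\<one>\<^bsub>A\<^esub>, False)"] image_eqI[of "1::int" ?q "(\<one>\<^bsub>A\<^esub>, True)"]
      by auto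
  qed
  have ker: "kernel ?P ?Z ?q = sdp_base A"
    unfolding kernel_def sdp_base_def by (auto split: if_splits)
  have cZ: "card (carrier ?Z) = 2" by (simp add: Z2_carrier)
  note ih = index2_from_hom[OF gP group_integer_mod_group hom surj cZ, unfolded ker]
  let ?T = "{x \<in> carrier ?P - sdp_base A. group.ord ?P x = 2}"
  have inT: "(a, True) \<in> ?T" if "a \<in> carrier A" for a
  proof -
    have "(a, True) \<otimes>\<^bsub>?P\<^esub> (a, True) = \<one>\<^bsub>?P\<^esub>" using that by simp
    moreover have "(a, True) \<noteq> \<one>\<^bsub>?P\<^esub>" by simp
    ultimately have "group.ord ?P (a, True) = 2" using P.ord_2_iff that by simp
    then show ?thesis using that by (auto simp: sdp_base_def)
  qed
  have "carrier ?P \<subseteq> generate ?P ?T"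
  proof
    fix x assume "x \<in> carrier ?P"
    then obtain a s where x: "x = (a, s)" "a \<in> carrier A" by (cases x) auto
    have g1: "(a, True) \<in> generate ?P ?T" using inT x by (intro generate.incl) auto
    show "x \<in> generate ?P ?T"
    proof (cases s)
      case True then show ?thesis using g1 x by simp
    next
      case False
      have "(\<one>\<^bsub>A\<^esub>, True) \<in> generate ?P ?T" using inT by (intro generate.incl) auto
      from generate.eng[OF g1 this] show ?thesis using x False by simp
    qed
  qed
  moreover have "generate ?P ?T \<subseteq> carrier ?P" by (rule P.generate_incl) auto
  ultimately show ?thesis unfolding GI_extension_def using gP ih by blast
qed


lemma uniq:
  fixes A :: "('a, 'b) monoid_scheme" and Gp :: "('c, 'd) monoid_scheme"
  assumes cA: "comm_group A" and gi: "GI_extension Gp N" and isoA: "A \<cong> Gp\<lparr>carrier := N\<rparr>"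
  shows "\<exists>\<phi> \<in> iso Gp (inv_sdp A). \<phi> ` N = sdp_base A"
proof -
  interpret A: comm_group A by fact
  have gG: "group Gp" and nN: "N \<lhd> Gp" and cR: "card (rcosets\<^bsub>Gp\<^esub> N) = 2"
    and gen: "carrier Gp = generate Gp {x \<in> carrier Gp - N. group.ord Gp x = 2}"
    using gi unfolding GI_extension_def by auto
  interpret G: group Gp by fact
  have sub: "subgroup N Gp" using nN normal_imp_subgroup by blast
  have NG: "N \<subseteq> carrier Gp" by (rule subgroup.subset[OF sub])
  have Nm: "x \<otimes>\<^bsub>Gp\<^esub> y \<in> N" if "x \<in> N" "y \<in> N" for x y by (rule subgroup.m_closed[OF sub that])
  have Ni: "inv\<^bsub>Gp\<^esub> x \<in> N" if "x \<in> N" for x by (rule subgroup.m_inv_closed[OF sub that])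
  have N1: "\<one>\<^bsub>Gp\<^esub> \<in> N" by (rule subgroup.one_closed[OF sub])
  obtain \<psi> where psi: "\<psi> \<in> iso A (Gp\<lparr>carrier := N\<rparr>)" using isoA unfolding is_iso_def by blast
  define \<theta> where "\<theta> = inv_into (carrier A) \<psi>"
  have th: "\<theta> \<in> iso (Gp\<lparr>carrier := N\<rparr>) A" unfolding \<theta>_def by (rule A.iso_set_sym[OF psi])
  have thbij: "bij_betw \<theta> N (carrier A)" using th by (simp add: iso_def)
  have thmul: "\<theta> (x \<otimes>\<^bsub>Gp\<^esub> y) = \<theta> x \<otimes>\<^bsub>A\<^esub> \<theta> y" if "x \<in> N" "y \<in> N" for x y
    using th that unfolding iso_def hom_def by auto
  have thc: "\<theta> x \<in> carrier A" if "x \<in> N" for x using thbij that bij_betwE by blast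
  have thinj: "x = y" if "\<theta> x = \<theta> y" "x \<in> N" "y \<in> N" for x y
    using thbij that unfolding bij_betw_def inj_on_def by blast
  have thone: "\<theta> \<one>\<^bsub>Gp\<^esub> = \<one>\<^bsub>A\<^esub>"
  proof -
    have "\<theta> \<one>\<^bsub>Gp\<^esub> \<otimes>\<^bsub>A\<^esub> \<theta> \<one>\<^bsub>Gp\<^esub> = \<theta> \<one>\<^bsub>Gp\<^esub> \<otimes>\<^bsub>A\<^esub> \<one>\<^bsub>A\<^esub>"
      using thmul[OF N1 N1] thc[OF N1] by simp
    then show ?thesis using A.l_cancel thc[OF N1] by blast
  qed
  have thinv: "\<theta> (inv\<^bsub>Gp\<^esub> x) = inv\<^bsub>A\<^esub> (\<theta> x)" if "x \<in> N" for x
  proof -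
    have "\<theta> (inv\<^bsub>Gp\<^esub> x) \<otimes>\<^bsub>A\<^esub> \<theta> x = \<one>\<^bsub>A\<^esub>"
      using thmul[OF Ni[OF that] that] that NG thone by auto
    from A.inv_equality[OF this thc[OF that] thc[OF Ni[OF that]]] show ?thesis by simp
  qed
  have comm: "x \<otimes>\<^bsub>Gp\<^esub> y = y \<otimes>\<^bsub>Gp\<^esub> x" if "x \<in> N" "y \<in> N" for x y
  proof -
    have "\<theta> (x \<otimes>\<^bsub>Gp\<^esub> y) = \<theta> (y \<otimes>\<^bsub>Gp\<^esub> x)"
      using thmul[OF that] thmul[OF that(2,1)] thc[OF that(1)] thc[OF that(2)] A.m_comm by simp
    from thinj[OF this Nm[OF that] Nm[OF that(2,1)]] show ?thesis .
  qed
  have fin: "finite (rcosets\<^bsub>Gp\<^esub> N)" using cR by (metis card.infinite zero_neq_numeral)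
  have NR: "N \<in> rcosets\<^bsub>Gp\<^esub> N" using G.rcosetsI[OF NG G.one_closed] G.coset_mult_one[OF NG] by simp
  have cos: "x \<otimes>\<^bsub>Gp\<^esub> inv\<^bsub>Gp\<^esub> y \<in> N" if x: "x \<in> carrier Gp" "x \<notin> N" and y: "y \<in> carrier Gp" "y \<notin> N" for x y
  proof -
    have R: "N #>\<^bsub>Gp\<^esub> x \<in> rcosets\<^bsub>Gp\<^esub> N" "N #>\<^bsub>Gp\<^esub> y \<in> rcosets\<^bsub>Gp\<^esub> N"
      using G.rcosetsI[OF NG] x y by auto
    have ne: "N #>\<^bsub>Gp\<^esub> x \<noteq> N" "N #>\<^bsub>Gp\<^esub> y \<noteq> N"
      using G.rcos_self[OF _ sub] x y by auto
    have "N #>\<^bsub>Gp\<^esub> x = N #>\<^bsub>Gp\<^esub> y"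
    proof (rule ccontr)
      assume "N #>\<^bsub>Gp\<^esub> x \<noteq> N #>\<^bsub>Gp\<^esub> y"
      then have "card {N, N #>\<^bsub>Gp\<^esub> x, N #>\<^bsub>Gp\<^esub> y} = 3" using ne by auto
      moreover have "card {N, N #>\<^bsub>Gp\<^esub> x, N #>\<^bsub>Gp\<^esub> y} \<le> card (rcosets\<^bsub>Gp\<^esub> N)"
        by (rule card_mono[OF fin]) (use R NR in auto)
      ultimately show False using cR by simp
    qed
    then have "x \<in> N #>\<^bsub>Gp\<^esub> y" using G.rcos_self[OF x(1) sub] by simp
    then obtain n where n: "n \<in> N" "x = n \<otimes>\<^bsub>Gp\<^esub> y" unfolding r_coset_def by auto
    moreover have "n \<in> carrier Gp" using n NG by auto
    ultimately have "x \<otimes>\<^bsub>Gp\<^esub> inv\<^bsub>Gp\<^esub> y = n" using y by (simp add: G.m_assoc)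
    then show ?thesis using n by simp
  qed
  have notsub: "\<not> carrier Gp \<subseteq> N"
  proof
    assume cs: "carrier Gp \<subseteq> N"
    have "rcosets\<^bsub>Gp\<^esub> N \<subseteq> {N}"
      unfolding RCOSETS_def using G.coset_join2[OF _ sub] cs by auto
    then have "card (rcosets\<^bsub>Gp\<^esub> N) \<le> card {N}" by (intro card_mono) auto
    then show False using cR by simp
  qed
  let ?T = "{x \<in> carrier Gp - N. group.ord Gp x = 2}"
  have "?T \<noteq> {}"
  proof
    assume e: "?T = {}"
    have "x = \<one>\<^bsub>Gp\<^esub>" if "x \<in> generate Gp {}" for x
      using that by (induction) auto
    moreover have "carrier Gp = generate Gp {}" using gen by (simp only: e)
    ultimately have "carrier Gp \<subseteq> N" using N1 by auto
    then show False using notsub by blast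
  qed
  then obtain t where t: "t \<in> carrier Gp" "t \<notin> N" "group.ord Gp t = 2" by blast
  have tt: "t \<otimes>\<^bsub>Gp\<^esub> t = \<one>\<^bsub>Gp\<^esub>" using G.ord_2_iff t by blast
  have it: "inv\<^bsub>Gp\<^esub> t = t" using G.inv_equality[OF tt t(1) t(1)] .
  have ttz [simp]: "t \<otimes>\<^bsub>Gp\<^esub> (t \<otimes>\<^bsub>Gp\<^esub> z) = z" if "z \<in> carrier Gp" for z
    using that t tt by (simp add: G.m_assoc[symmetric])
  have xt: "x \<otimes>\<^bsub>Gp\<^esub> t \<in> N" if "x \<in> carrier Gp" "x \<notin> N" for x
    using cos[OF that t(1,2)] it by simp
  define c where "c n \<longleftrightarrow> t \<otimes>\<^bsub>Gp\<^esub> n \<otimes>\<^bsub>Gp\<^esub> t = inv\<^bsub>Gp\<^esub> n" for n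
  have cmul: "c (a \<otimes>\<^bsub>Gp\<^esub> b)" if "a \<in> N" "b \<in> N" "c a" "c b" for a b
  proof -
    have a: "a \<in> carrier Gp" and b: "b \<in> carrier Gp" using that NG by auto
    have "t \<otimes>\<^bsub>Gp\<^esub> (a \<otimes>\<^bsub>Gp\<^esub> b) \<otimes>\<^bsub>Gp\<^esub> t
        = (t \<otimes>\<^bsub>Gp\<^esub> a \<otimes>\<^bsub>Gp\<^esub> t) \<otimes>\<^bsub>Gp\<^esub> (t \<otimes>\<^bsub>Gp\<^esub> b \<otimes>\<^bsub>Gp\<^esub> t)"
      using a b t by (simp add: G.m_assoc)
    also have "\<dots> = inv\<^bsub>Gp\<^esub> a \<otimes>\<^bsub>Gp\<^esub> inv\<^bsub>Gp\<^esub> b" using that unfolding c_def by simp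
    also have "\<dots> = inv\<^bsub>Gp\<^esub> (b \<otimes>\<^bsub>Gp\<^esub> a)" using a b by (simp add: G.inv_mult_group)
    also have "\<dots> = inv\<^bsub>Gp\<^esub> (a \<otimes>\<^bsub>Gp\<^esub> b)" using comm[OF that(2,1)] by simp
    finally show ?thesis unfolding c_def .
  qed
  have cinv: "c (inv\<^bsub>Gp\<^esub> a)" if "a \<in> N" "c a" for a
  proof -
    have a: "a \<in> carrier Gp" using that NG by auto
    have "t \<otimes>\<^bsub>Gp\<^esub> inv\<^bsub>Gp\<^esub> a \<otimes>\<^bsub>Gp\<^esub> t = inv\<^bsub>Gp\<^esub> (t \<otimes>\<^bsub>Gp\<^esub> a \<otimes>\<^bsub>Gp\<^esub> t)"
      using a t it by (simp add: G.inv_mult_group G.m_assoc)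
    then show ?thesis using that unfolding c_def by simp
  qed
  define Q where "Q x \<longleftrightarrow> (x \<in> N \<longrightarrow> c x) \<and> (x \<notin> N \<longrightarrow> c (x \<otimes>\<^bsub>Gp\<^esub> t))" for x
  have cinvol: "c (h \<otimes>\<^bsub>Gp\<^esub> t)" if "h \<in> carrier Gp" "h \<otimes>\<^bsub>Gp\<^esub> h = \<one>\<^bsub>Gp\<^esub>" for h
  proof -
    have ih: "inv\<^bsub>Gp\<^esub> h = h" using G.inv_equality[OF that(2) that(1) that(1)] .
    have "t \<otimes>\<^bsub>Gp\<^esub> (h \<otimes>\<^bsub>Gp\<^esub> t) \<otimes>\<^bsub>Gp\<^esub> t = t \<otimes>\<^bsub>Gp\<^esub> h"
      using that t tt by (simp add: G.m_assoc)
    also have "\<dots> = inv\<^bsub>Gp\<^esub> (h \<otimes>\<^bsub>Gp\<^esub> t)" using that t it ih by (simp add: G.inv_mult_group)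
    finally show ?thesis unfolding c_def .
  qed
  have genQ: "Q x" if "x \<in> generate Gp ?T" for x
    using that
  proof (induction)
    case one
    then show ?case unfolding Q_def c_def using N1 t tt by simp
  next
    case (incl h)
    then have "h \<in> carrier Gp" "h \<notin> N" "h \<otimes>\<^bsub>Gp\<^esub> h = \<one>\<^bsub>Gp\<^esub>" using G.ord_2_iff by auto
    then show ?case unfolding Q_def using cinvol by blast
  next
    case (inv h)
    then have h: "h \<in> carrier Gp" "h \<notin> N" "h \<otimes>\<^bsub>Gp\<^esub> h = \<one>\<^bsub>Gp\<^esub>" using G.ord_2_iff by auto
    then have "inv\<^bsub>Gp\<^esub> h = h" using G.inv_equality by blast
    then show ?case unfolding Q_def using cinvol h by simp
  next
    case (eng x y)
    have x: "x \<in> carrier Gp" and y: "y \<in> carrier Gp"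
      using eng.hyps G.generate_incl[of ?T] by auto
    show ?case
    proof (cases "x \<in> N"; cases "y \<in> N")
      assume xN: "x \<in> N" and yN: "y \<in> N"
      then show ?thesis using eng.IH cmul Nm unfolding Q_def by blast
    next
      assume xN: "x \<in> N" and yN: "y \<notin> N"
      have nxy: "x \<otimes>\<^bsub>Gp\<^esub> y \<notin> N"
      proof
        assume "x \<otimes>\<^bsub>Gp\<^esub> y \<in> N"
        then have "inv\<^bsub>Gp\<^esub> x \<otimes>\<^bsub>Gp\<^esub> (x \<otimes>\<^bsub>Gp\<^esub> y) \<in> N" using Nm Ni xN by blast
        then show False using yN x y by (simp add: G.m_assoc[symmetric])
      qed
      have "c (x \<otimes>\<^bsub>Gp\<^esub> (y \<otimes>\<^bsub>Gp\<^esub> t))"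
        using cmul[OF xN xt[OF y yN]] eng.IH xN yN unfolding Q_def by blast
      then show ?thesis using nxy x y t unfolding Q_def by (simp add: G.m_assoc)
    next
      assume xN: "x \<notin> N" and yN: "y \<in> N"
      have nxy: "x \<otimes>\<^bsub>Gp\<^esub> y \<notin> N"
      proof
        assume "x \<otimes>\<^bsub>Gp\<^esub> y \<in> N"
        then have "(x \<otimes>\<^bsub>Gp\<^esub> y) \<otimes>\<^bsub>Gp\<^esub> inv\<^bsub>Gp\<^esub> y \<in> N" using Nm Ni yN by blast
        then show False using xN x y by (simp add: G.m_assoc)
      qed
      have cy: "c y" using eng.IH yN unfolding Q_def by blast
      have "c ((x \<otimes>\<^bsub>Gp\<^esub> t) \<otimes>\<^bsub>Gp\<^esub> inv\<^bsub>Gp\<^esub> y)"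
        using cmul[OF xt[OF x xN] Ni[OF yN]] cinv[OF yN cy] eng.IH xN unfolding Q_def by blast
      moreover have "(x \<otimes>\<^bsub>Gp\<^esub> t) \<otimes>\<^bsub>Gp\<^esub> inv\<^bsub>Gp\<^esub> y = x \<otimes>\<^bsub>Gp\<^esub> y \<otimes>\<^bsub>Gp\<^esub> t"
      proof -
        have "inv\<^bsub>Gp\<^esub> y = t \<otimes>\<^bsub>Gp\<^esub> y \<otimes>\<^bsub>Gp\<^esub> t" using cy unfolding c_def by simp
        then show ?thesis using x y t tt by (simp add: G.m_assoc)
      qed
      ultimately show ?thesis using nxy unfolding Q_def by simp
    next
      assume xN: "x \<notin> N" and yN: "y \<notin> N"
      have cx: "c (x \<otimes>\<^bsub>Gp\<^esub> t)" and cy: "c (y \<otimes>\<^bsub>Gp\<^esub> t)" using eng.IH xN yN unfolding Q_def by auto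
      have eq: "x \<otimes>\<^bsub>Gp\<^esub> y = (x \<otimes>\<^bsub>Gp\<^esub> t) \<otimes>\<^bsub>Gp\<^esub> inv\<^bsub>Gp\<^esub> (y \<otimes>\<^bsub>Gp\<^esub> t)"
      proof -
        have "inv\<^bsub>Gp\<^esub> (y \<otimes>\<^bsub>Gp\<^esub> t) = t \<otimes>\<^bsub>Gp\<^esub> (y \<otimes>\<^bsub>Gp\<^esub> t) \<otimes>\<^bsub>Gp\<^esub> t"
          using cy unfolding c_def by simp
        then show ?thesis using x y t tt by (simp add: G.m_assoc)
      qed
      have inN: "x \<otimes>\<^bsub>Gp\<^esub> y \<in> N" unfolding eq by (rule Nm[OF xt[OF x xN] Ni[OF xt[OF y yN]]])
      have "c (x \<otimes>\<^bsub>Gp\<^esub> y)" using eq cmul[OF xt[OF x xN] Ni[OF xt[OF y yN]] cx cinv[OF xt[OF y yN] cy]] by simp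
      then show ?thesis using inN unfolding Q_def by simp
    qed
  qed
  have cN: "t \<otimes>\<^bsub>Gp\<^esub> n \<otimes>\<^bsub>Gp\<^esub> t = inv\<^bsub>Gp\<^esub> n" if "n \<in> N" for n
    using genQ[of n] that NG gen unfolding Q_def c_def by auto
  define \<phi> where "\<phi> x = (if x \<in> N then (\<theta> x, False) else (\<theta> (x \<otimes>\<^bsub>Gp\<^esub> t), True))" for x
  have tyt: "t \<otimes>\<^bsub>Gp\<^esub> y \<otimes>\<^bsub>Gp\<^esub> t = inv\<^bsub>Gp\<^esub> y" if "y \<in> N" for y using cN that .
  have hom: "\<phi> (x \<otimes>\<^bsub>Gp\<^esub> y) = \<phi> x \<otimes>\<^bsub>inv_sdp A\<^esub> \<phi> y" if x: "x \<in> carrier Gp" and y: "y \<in> carrier Gp" for x y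
  proof (cases "x \<in> N"; cases "y \<in> N")
    assume xN: "x \<in> N" and yN: "y \<in> N"
    then show ?thesis unfolding \<phi>_def using Nm thmul by simp
  next
    assume xN: "x \<in> N" and yN: "y \<notin> N"
    have nxy: "x \<otimes>\<^bsub>Gp\<^esub> y \<notin> N"
    proof
      assume "x \<otimes>\<^bsub>Gp\<^esub> y \<in> N"
      then have "inv\<^bsub>Gp\<^esub> x \<otimes>\<^bsub>Gp\<^esub> (x \<otimes>\<^bsub>Gp\<^esub> y) \<in> N" using Nm Ni xN by blast
      then show False using yN x y by (simp add: G.m_assoc[symmetric])
    qed
    have "x \<otimes>\<^bsub>Gp\<^esub> y \<otimes>\<^bsub>Gp\<^esub> t = x \<otimes>\<^bsub>Gp\<^esub> (y \<otimes>\<^bsub>Gp\<^esub> t)" using x y t by (simp add: G.m_assoc)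
    then show ?thesis unfolding \<phi>_def using nxy xN yN thmul[OF xN xt[OF y yN]] by simp
  next
    assume xN: "x \<notin> N" and yN: "y \<in> N"
    have nxy: "x \<otimes>\<^bsub>Gp\<^esub> y \<notin> N"
    proof
      assume "x \<otimes>\<^bsub>Gp\<^esub> y \<in> N"
      then have "(x \<otimes>\<^bsub>Gp\<^esub> y) \<otimes>\<^bsub>Gp\<^esub> inv\<^bsub>Gp\<^esub> y \<in> N" using Nm Ni yN by blast
      then show False using xN x y by (simp add: G.m_assoc)
    qed
    have "x \<otimes>\<^bsub>Gp\<^esub> y \<otimes>\<^bsub>Gp\<^esub> t = (x \<otimes>\<^bsub>Gp\<^esub> t) \<otimes>\<^bsub>Gp\<^esub> inv\<^bsub>Gp\<^esub> y"
    proof -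
      have "inv\<^bsub>Gp\<^esub> y = t \<otimes>\<^bsub>Gp\<^esub> y \<otimes>\<^bsub>Gp\<^esub> t" using tyt[OF yN] by simp
      then show ?thesis using x y t tt by (simp add: G.m_assoc)
    qed
    then show ?thesis unfolding \<phi>_def using nxy xN yN thmul[OF xt[OF x xN] Ni[OF yN]] thinv[OF yN] by simp
  next
    assume xN: "x \<notin> N" and yN: "y \<notin> N"
    have eq: "x \<otimes>\<^bsub>Gp\<^esub> y = (x \<otimes>\<^bsub>Gp\<^esub> t) \<otimes>\<^bsub>Gp\<^esub> inv\<^bsub>Gp\<^esub> (y \<otimes>\<^bsub>Gp\<^esub> t)"
    proof -
      have "inv\<^bsub>Gp\<^esub> (y \<otimes>\<^bsub>Gp\<^esub> t) = t \<otimes>\<^bsub>Gp\<^esub> (y \<otimes>\<^bsub>Gp\<^esub> t) \<otimes>\<^bsub>Gp\<^esub> t"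
        using tyt[OF xt[OF y yN]] by simp
      then show ?thesis using x y t tt by (simp add: G.m_assoc)
    qed
    have inN: "x \<otimes>\<^bsub>Gp\<^esub> y \<in> N" unfolding eq by (rule Nm[OF xt[OF x xN] Ni[OF xt[OF y yN]]])
    have "\<theta> (x \<otimes>\<^bsub>Gp\<^esub> y) = \<theta> (x \<otimes>\<^bsub>Gp\<^esub> t) \<otimes>\<^bsub>A\<^esub> inv\<^bsub>A\<^esub> (\<theta> (y \<otimes>\<^bsub>Gp\<^esub> t))"
      unfolding eq using thmul[OF xt[OF x xN] Ni[OF xt[OF y yN]]] thinv[OF xt[OF y yN]] by simp
    then show ?thesis unfolding \<phi>_def using inN xN yN by simp
  qed
  have phic: "\<phi> x \<in> carrier (inv_sdp A)" if "x \<in> carrier Gp" for x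
    unfolding \<phi>_def using thc xt that by auto
  have phihom: "\<phi> \<in> hom Gp (inv_sdp A)"
    unfolding hom_def using phic hom by auto
  have inj: "inj_on \<phi> (carrier Gp)"
  proof (rule inj_onI)
    fix x y assume x: "x \<in> carrier Gp" and y: "y \<in> carrier Gp" and e: "\<phi> x = \<phi> y"
    show "x = y"
    proof (cases "x \<in> N"; cases "y \<in> N")
      assume "x \<in> N" "y \<in> N" then show ?thesis using e thinj unfolding \<phi>_def by simp
    next
      assume "x \<in> N" "y \<notin> N" then show ?thesis using e unfolding \<phi>_def by simp
    next
      assume "x \<notin> N" "y \<in> N" then show ?thesis using e unfolding \<phi>_def by simp
    next
      assume xN: "x \<notin> N" and yN: "y \<notin> N"
      then have "\<theta> (x \<otimes>\<^bsub>Gp\<^esub> t) = \<theta> (y \<otimes>\<^bsub>Gp\<^esub> t)" using e unfolding \<phi>_def by simp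
      then have "x \<otimes>\<^bsub>Gp\<^esub> t = y \<otimes>\<^bsub>Gp\<^esub> t" using thinj xt x y xN yN by blast
      then show ?thesis using x y t G.r_cancel by blast
    qed
  qed
  have thsurj: "\<theta> ` N = carrier A" using thbij unfolding bij_betw_def by (rule conjunct2)
  have img: "\<phi> ` carrier Gp = carrier (inv_sdp A)"
  proof
    show "\<phi> ` carrier Gp \<subseteq> carrier (inv_sdp A)" by (rule image_subsetI) (rule phic)
    show "carrier (inv_sdp A) \<subseteq> \<phi> ` carrier Gp"
    proof
      fix z assume "z \<in> carrier (inv_sdp A)"
      then obtain a s where z: "z = (a, s)" "a \<in> carrier A" by auto
      then obtain n where n: "n \<in> N" "a = \<theta> n" using thsurj by blast
      have nc: "n \<in> carrier Gp" using n NG by auto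
      show "z \<in> \<phi> ` carrier Gp"
      proof (cases s)
        case False
        then have "\<phi> n = z" unfolding \<phi>_def using n z by simp
        then show ?thesis using nc by blast
      next
        case True
        have nt: "n \<otimes>\<^bsub>Gp\<^esub> t \<notin> N"
        proof
          assume "n \<otimes>\<^bsub>Gp\<^esub> t \<in> N"
          then have "inv\<^bsub>Gp\<^esub> n \<otimes>\<^bsub>Gp\<^esub> (n \<otimes>\<^bsub>Gp\<^esub> t) \<in> N" using Nm Ni n by blast
          then show False using t nc by (simp add: G.m_assoc[symmetric])
        qed
        have "n \<otimes>\<^bsub>Gp\<^esub> t \<otimes>\<^bsub>Gp\<^esub> t = n" using nc t tt by (simp add: G.m_assoc)
        then have "\<phi> (n \<otimes>\<^bsub>Gp\<^esub> t) = z" unfolding \<phi>_def using nt n z True by simp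
        then show ?thesis using nc t by blast
      qed
    qed
  qed
  have "\<phi> \<in> iso Gp (inv_sdp A)"
    unfolding iso_def bij_betw_def using phihom inj img by blast
  moreover have "\<phi> ` N = sdp_base A"
  proof -
    have "\<phi> ` N = (\<lambda>a. (a, False)) ` (\<theta> ` N)" unfolding \<phi>_def by (auto simp: image_iff)
    then show ?thesis unfolding sdp_base_def thsurj .
  qed
  ultimately show ?thesis by blast
qed


theorem mainTheorem2:
  shows
  "(\<forall>(A :: ('a, 'b) monoid_scheme). comm_group A \<and> finite (carrier A) \<longrightarrow>
       GI_extension (inv_sdp A) (sdp_base A) \<and>
       (\<forall>(Gp :: ('c, 'd) monoid_scheme) N.
          GI_extension Gp N \<and> A \<cong> Gp\<lparr>carrier := N\<rparr> \<longrightarrow>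
          (\<exists>\<phi> \<in> iso Gp (inv_sdp A). \<phi> ` N = sdp_base A)))
   \<and> (\<forall>(G :: ('e, 'f) monoid_scheme). group G \<and> finite (carrier G) \<longrightarrow>
       (GI_extension (G \<times>\<times> integer_mod_group 2) (carrier G \<times> {0})
        \<longleftrightarrow> carrier G = generate G {x \<in> carrier G. group.ord G x = 2}))
   \<and> (\<forall>n::nat. n \<ge> 2 \<longrightarrow> GI_extension (sym_group n) (carrier (alt_group n)))"
proof (intro conjI allI impI)
  fix A :: "('a, 'b) monoid_scheme"
  assume h: "comm_group A \<and> finite (carrier A)"
  show "GI_extension (inv_sdp A) (sdp_base A)" by (rule part1a[OF conjunct1[OF h]])
next
  fix A :: "('a, 'b) monoid_scheme"
  assume h: "comm_group A \<and> finite (carrier A)"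
  fix Gp :: "('c, 'd) monoid_scheme" and N
  assume h2: "GI_extension Gp N \<and> A \<cong> Gp\<lparr>carrier := N\<rparr>"
  show "\<exists>\<phi> \<in> iso Gp (inv_sdp A). \<phi> ` N = sdp_base A"
    by (rule uniq[OF conjunct1[OF h] conjunct1[OF h2] conjunct2[OF h2]])
next
  fix G :: "('e, 'f) monoid_scheme"
  assume hG: "group G \<and> finite (carrier G)"
  show "GI_extension (G \<times>\<times> integer_mod_group 2) (carrier G \<times> {0})
        \<longleftrightarrow> carrier G = generate G {x \<in> carrier G. group.ord G x = 2}"
    by (rule part2[OF conjunct1[OF hG]])
next
  fix n :: nat
  assume "n \<ge> 2"
  then show "GI_extension (sym_group n) (carrier (alt_group n))" by (rule part3)
qed

end
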